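(* Let $n,N\ge 1$ and let $r_1,\dots,r_N,r$ be positive integers with $r_i\le r\le\lfloor (n-1)/2\rfloor$. Let $f:\mathbb{R}^{Nn}\to\mathbb{R}$ be nonnegative, level-bounded and continuously differentiable with Lipschitz continuous gradient. Let $(k,\mathcal{A}_1,\dots,\mathcal{A}_k,\Omega,C_1,\dots,C_k)$ be given by one of Variants I, II, III described in the context, let $\lambda>0$, and let $$F_\lambda(y)=f(y)+\delta_\Omega(y)+\sum_{i=1}^k\frac1{2\lambda}\mathrm{dist}^2(\mathcal{A}_i(y),C_i),\qquad h(y)=f(y)+\sum_{i=1}^k\frac1{2\lambda}\|\mathcal{A}_i(y)\|_F^2 .$$ Consider the following algorithm (vNPG$_{\rm major}$). Choose $y^0\in\Omega$, $L_{\max}>L_{\min}>0$, $\tau>1$, $c>0$ and an integer $M\ge 0$. At iteration $l=0,1,\dots$: pick any $\xi^l=\sum_{i=1}^k\frac1\lambda\mathcal{A}_i^*(Y_i)$ with $Y_i\in\mathcal{P}_{C_i}(\mathcal{A}_i(y^l))$, choose any $L_l^0\in[L_{\min},L_{\max}]$, and for $i=0,1,\dots$ set $L_{l,i}=L_l^0\tau^i$ and pick any $$u_i^l\in\mathcal{P}^s_\Omega\Big(y^l-\tfrac1{L_{l,i}}(\nabla h(y^l)-\xi^l);\,y^l\Big)$$ until some $u_i^l$ satisfies $$F_\lambda(u_i^l)\le\max_{[l-M]_+\le j\le l}F_\lambda(y^j)-\frac c2\|u_i^l-y^l\|^2 ;$$ then set $\bar L_l=L_{l,i}$ and $y^{l+1}=u_i^l$.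 Then: (i) for every $l$, the inner loop over $i$ terminates after finitely many steps (the line-search criterion is well-defined); (ii) the sequence $\{\bar L_l\}$ is bounded; (iii) for every $\epsilon>0$ there exists $l$ such that the following three conditions hold simultaneously: $$\|y^{l+1}-y^l\|\le\epsilon,\qquad F_\lambda(y^l)\le F_\lambda(y^0),$$ $$\mathrm{dist}\Big(0,\ \nabla f(y^l)+N_\Omega(y^{l+1})+\sum_{i=1}^k\frac1\lambda\mathcal{A}_i^*\big(\mathcal{A}_i(y^l)-\mathcal{P}_{C_i}(\mathcal{A}_i(y^l))\big)\Big)\le\epsilon .$$
   Context: For $x\in\mathbb{R}^n$ and an integer $1\le l\le n$, the Hankel matrix $\mathcal{H}_l(x)\in\mathbb{R}^{l\times(n-l+1)}$ has $(i,j)$ entry $x(i+j-1)$. For $y=(y_1^\top,\dots,y_N^\top)^\top\in\mathbb{R}^{Nn}$ with $y_i\in\mathbb{R}^n$, define linear maps $\mathcal{L}_i(y)=\mathcal{H}_{r_i+1}(y_i)$ ($i=1,\dots,N$) and $\mathcal{L}(y)=[\mathcal{H}_{r+1}(y_1)\ \cdots\ \mathcal{H}_{r+1}(y_N)]$. The three variants are: Variant I: $k=1$, $\mathcal{A}_1=\mathcal{L}$, $\Omega=\{y:\mathrm{rank}(\mathcal{L}_i(y))\le r_i,\ i=1,\dots,N\}$, $C_1=\{Y:\mathrm{rank}(Y)\le r\}$. Variant II: $k=N$, $\mathcal{A}_i=\mathcal{L}_i$, $\Omega=\{y:\mathrm{rank}(\mathcal{L}(y))\le r\}$, $C_i=\{Y:\mathrm{rank}(Y)\le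 r_i\}$. Variant III: $k=N+1$, $\mathcal{A}_i=\mathcal{L}_i$ ($i\le N$), $\mathcal{A}_{N+1}=\mathcal{L}$, $\Omega=\mathbb{R}^{Nn}$, $C_i=\{Y:\mathrm{rank}(Y)\le r_i\}$ ($i\le N$), $C_{N+1}=\{Y:\mathrm{rank}(Y)\le r\}$. Distances and projections $\mathcal{P}_{C}(X)$ (set of nearest points) for matrix sets use the Frobenius norm; $\mathcal{A}_i^*$ is the adjoint; $\delta_\Omega$ is the indicator function of $\Omega$; $N_\Omega(y)$ is the limiting (Mordukhovich) normal cone of $\Omega$ at $y$ in the sense of Rockafellar–Wets; set-valued expressions are Minkowski sums. Pseudo-projection: for a nonempty closed $\Omega\subseteq\mathbb{R}^m$, $u\in\Omega$, $x\in\mathbb{R}^m$, $\mathcal{P}^s_\Omega(x;u)$ is the set of all $y\in\Omega$ with $x-y\in N_\Omega(y)$ and $\|y-x\|\le\|u-x\|$. *)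

theory Defs
  imports "HOL-Analysis.Analysis" "Jordan_Normal_Form.DL_Rank"
begin

definition mrank :: "real Matrix.mat \<Rightarrow> nat" where
  "mrank A = vec_space.rank (dim_row A) A"

definition minner :: "real Matrix.mat \<Rightarrow> real Matrix.mat \<Rightarrow> real" where
  "minner X Y = (\<Sum>i<dim_row X. \<Sum>j<dim_col X. X $$ (i,j) * Y $$ (i,j))"

definition fro :: "real Matrix.mat \<Rightarrow> real" where
  "fro X = sqrt (\<Sum>i<dim_row X. \<Sum>j<dim_col X. (X $$ (i,j))\<^sup>2)"

definition mdist :: "real Matrix.mat \<Rightarrow> real Matrix.mat set \<Rightarrow> real" where
  "mdist X C = Inf ((\<lambda>Y. fro (X - Y)) ` C)"

definition mproj :: "real Matrix.mat set \<Rightarrow> real Matrix.mat \<Rightarrow> real Matrix.mat set" where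
  "mproj C X = {Y \<in> C. fro (X - Y) = mdist X C}"

definition rank_le :: "nat \<Rightarrow> nat \<Rightarrow> nat \<Rightarrow> real Matrix.mat set" where
  "rank_le m p \<rho> = {Y \<in> carrier_mat m p. mrank Y \<le> \<rho>}"

definition madj :: "(real^'d \<Rightarrow> real Matrix.mat) \<Rightarrow> real Matrix.mat \<Rightarrow> real^'d" where
  "madj A Y = (THE z. \<forall>x. z \<bullet> x = minner (A x) Y)"

(* Hankel matrix H_l(x) for x in R^n (0-indexed: entry (a,b) = x(a+b)) *)
definition hankel :: "nat \<Rightarrow> nat \<Rightarrow> (nat \<Rightarrow> real) \<Rightarrow> real Matrix.mat" where
  "hankel n l x = Matrix.mat l (n - l + 1) (\<lambda>(a,b). x (a + b))"

(* y in R^{Nn}: coordinates indexed by a type 'd, identified with {0..<N*n} by idx;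
   block i (0-indexed, i < N) is y_{i+1} in R^n *)
definition blk :: "nat \<Rightarrow> (nat \<Rightarrow> 'd) \<Rightarrow> nat \<Rightarrow> real^'d \<Rightarrow> nat \<Rightarrow> real" where
  "blk n idx i y j = y $ idx (i * n + j)"

definition Lsmall :: "nat \<Rightarrow> (nat \<Rightarrow> 'd) \<Rightarrow> (nat \<Rightarrow> nat) \<Rightarrow> nat \<Rightarrow> real^'d \<Rightarrow> real Matrix.mat" where
  "Lsmall n idx rs i y = hankel n (rs i + 1) (blk n idx i y)"

(* L(y) = [H_{r+1}(y_1) ... H_{r+1}(y_N)] *)
definition Lbig :: "nat \<Rightarrow> nat \<Rightarrow> (nat \<Rightarrow> 'd) \<Rightarrow> nat \<Rightarrow> real^'d \<Rightarrow> real Matrix.mat" where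
  "Lbig n N idx r y = Matrix.mat (r + 1) (N * (n - r))
      (\<lambda>(a,b). blk n idx (b div (n - r)) y (a + b mod (n - r)))"

datatype variant = VarI | VarII | VarIII

definition kk :: "variant \<Rightarrow> nat \<Rightarrow> nat" where
  "kk v N = (case v of VarI \<Rightarrow> 1 | VarII \<Rightarrow> N | VarIII \<Rightarrow> N + 1)"

(* A_{i+1} for i < k (0-indexed) *)
definition AA :: "variant \<Rightarrow> nat \<Rightarrow> nat \<Rightarrow> (nat \<Rightarrow> 'd) \<Rightarrow> nat \<Rightarrow> (nat \<Rightarrow> nat) \<Rightarrow> nat
                   \<Rightarrow> real^'d \<Rightarrow> real Matrix.mat" where
  "AA v n N idx r rs i = (case v of
      VarI \<Rightarrow> Lbig n N idx r
    | VarII \<Rightarrow> Lsmall n idx rs i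
    | VarIII \<Rightarrow> (if i < N then Lsmall n idx rs i else Lbig n N idx r))"

(* C_{i+1} for i < k (0-indexed), as a set of matrices of the size of the range of A_{i+1} *)
definition CC :: "variant \<Rightarrow> nat \<Rightarrow> nat \<Rightarrow> nat \<Rightarrow> (nat \<Rightarrow> nat) \<Rightarrow> nat \<Rightarrow> real Matrix.mat set" where
  "CC v n N r rs i = (case v of
      VarI \<Rightarrow> rank_le (r + 1) (N * (n - r)) r
    | VarII \<Rightarrow> rank_le (rs i + 1) (n - rs i) (rs i)
    | VarIII \<Rightarrow> (if i < N then rank_le (rs i + 1) (n - rs i) (rs i)
                else rank_le (r + 1) (N * (n - r)) r))"

definition Omega :: "variant \<Rightarrow> nat \<Rightarrow> nat \<Rightarrow> (nat \<Rightarrow> 'd) \<Rightarrow> nat \<Rightarrow> (nat \<Rightarrow> nat) \<Rightarrow> (real^'d) set" where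
  "Omega v n N idx r rs = (case v of
      VarI \<Rightarrow> {y. \<forall>i<N. mrank (Lsmall n idx rs i y) \<le> rs i}
    | VarII \<Rightarrow> {y. mrank (Lbig n N idx r y) \<le> r}
    | VarIII \<Rightarrow> UNIV)"

definition grad :: "(real^'d \<Rightarrow> real) \<Rightarrow> real^'d \<Rightarrow> real^'d" where
  "grad \<phi> x = (THE g. (\<phi> has_derivative (\<lambda>h. g \<bullet> h)) (at x))"

definition indic :: "'a set \<Rightarrow> 'a \<Rightarrow> ereal" where
  "indic S x = (if x \<in> S then 0 else \<infinity>)"

definition reg_normal_cone :: "(real^'d) set \<Rightarrow> real^'d \<Rightarrow> (real^'d) set" where
  "reg_normal_cone S x = (if x \<in> S then
     {v. \<forall>e>0. \<exists>d>0. \<forall>x'\<in>S. norm (x' - x) < d \<longrightarrow> v \<bullet> (x' - x) \<le> e * norm (x' - x)}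
   else {})"

definition normal_cone :: "(real^'d) set \<Rightarrow> real^'d \<Rightarrow> (real^'d) set" where
  "normal_cone S x = (if x \<in> S then
     {v. \<exists>xs vs. (\<forall>m. xs m \<in> S \<and> vs m \<in> reg_normal_cone S (xs m)) \<and>
                 xs \<longlonglongrightarrow> x \<and> vs \<longlonglongrightarrow> v}
   else {})"

definition pproj :: "(real^'d) set \<Rightarrow> real^'d \<Rightarrow> real^'d \<Rightarrow> (real^'d) set" where
  "pproj S x u = {y \<in> S. x - y \<in> normal_cone S y \<and> norm (y - x) \<le> norm (u - x)}"

definition Flam :: "variant \<Rightarrow> nat \<Rightarrow> nat \<Rightarrow> (nat \<Rightarrow> 'd) \<Rightarrow> nat \<Rightarrow> (nat \<Rightarrow> nat)
                    \<Rightarrow> (real^'d \<Rightarrow> real) \<Rightarrow> real \<Rightarrow> real^'d \<Rightarrow> ereal" where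
  "Flam v n N idx r rs f lam y =
     ereal (f y) + indic (Omega v n N idx r rs) y
     + ereal (\<Sum>i<kk v N. 1 / (2 * lam) * (mdist (AA v n N idx r rs i y) (CC v n N r rs i))\<^sup>2)"

definition hfun :: "variant \<Rightarrow> nat \<Rightarrow> nat \<Rightarrow> (nat \<Rightarrow> 'd) \<Rightarrow> nat \<Rightarrow> (nat \<Rightarrow> nat)
                    \<Rightarrow> (real^'d \<Rightarrow> real) \<Rightarrow> real \<Rightarrow> real^'d \<Rightarrow> real" where
  "hfun v n N idx r rs f lam y =
     f y + (\<Sum>i<kk v N. 1 / (2 * lam) * (fro (AA v n N idx r rs i y))\<^sup>2)"

definition xi_ok :: "variant \<Rightarrow> nat \<Rightarrow> nat \<Rightarrow> (nat \<Rightarrow> 'd) \<Rightarrow> nat \<Rightarrow> (nat \<Rightarrow> nat)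
                     \<Rightarrow> real \<Rightarrow> real^'d \<Rightarrow> real^'d \<Rightarrow> bool" where
  "xi_ok v n N idx r rs lam y xi \<longleftrightarrow>
     (\<exists>Y. (\<forall>i<kk v N. Y i \<in> mproj (CC v n N r rs i) (AA v n N idx r rs i y)) \<and>
          xi = (\<Sum>i<kk v N. (1 / lam) *\<^sub>R madj (AA v n N idx r rs i) (Y i)))"

definition accept :: "variant \<Rightarrow> nat \<Rightarrow> nat \<Rightarrow> (nat \<Rightarrow> 'd) \<Rightarrow> nat \<Rightarrow> (nat \<Rightarrow> nat)
                      \<Rightarrow> (real^'d \<Rightarrow> real) \<Rightarrow> real \<Rightarrow> real \<Rightarrow> nat
                      \<Rightarrow> (nat \<Rightarrow> real^'d) \<Rightarrow> nat \<Rightarrow> real^'d \<Rightarrow> bool" where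
  "accept v n N idx r rs f lam c M y l u \<longleftrightarrow>
     Flam v n N idx r rs f lam u
       \<le> Max ((\<lambda>j. Flam v n N idx r rs f lam (y j)) ` {l - M..l})
          - ereal (c / 2 * (norm (u - y l))\<^sup>2)"

definition candidate :: "variant \<Rightarrow> nat \<Rightarrow> nat \<Rightarrow> (nat \<Rightarrow> 'd) \<Rightarrow> nat \<Rightarrow> (nat \<Rightarrow> nat)
                         \<Rightarrow> (real^'d \<Rightarrow> real) \<Rightarrow> real \<Rightarrow> real^'d \<Rightarrow> real^'d \<Rightarrow> real
                         \<Rightarrow> real^'d \<Rightarrow> bool" where
  "candidate v n N idx r rs f lam yl xi L u \<longleftrightarrow>
     u \<in> pproj (Omega v n N idx r rs)
            (yl - (1 / L) *\<^sub>R (grad (hfun v n N idx r rs f lam) yl - xi)) yl"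

definition vnpg_step :: "variant \<Rightarrow> nat \<Rightarrow> nat \<Rightarrow> (nat \<Rightarrow> 'd) \<Rightarrow> nat \<Rightarrow> (nat \<Rightarrow> nat)
                         \<Rightarrow> (real^'d \<Rightarrow> real) \<Rightarrow> real \<Rightarrow> real \<Rightarrow> real \<Rightarrow> real \<Rightarrow> real \<Rightarrow> nat
                         \<Rightarrow> (nat \<Rightarrow> real^'d) \<Rightarrow> nat \<Rightarrow> real \<Rightarrow> bool" where
  "vnpg_step v n N idx r rs f lam Lmin Lmax tau c M y l Lb \<longleftrightarrow>
     (\<exists>xi L0 it u.
        xi_ok v n N idx r rs lam (y l) xi \<and> Lmin \<le> L0 \<and> L0 \<le> Lmax \<and>
        (\<forall>i\<le>it. candidate v n N idx r rs f lam (y l) xi (L0 * tau ^ i) (u i)) \<and>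
        (\<forall>i<it. \<not> accept v n N idx r rs f lam c M y l (u i)) \<and>
        accept v n N idx r rs f lam c M y l (u it) \<and>
        Lb = L0 * tau ^ it \<and> y (Suc l) = u it)"

definition vnpg_prefix :: "variant \<Rightarrow> nat \<Rightarrow> nat \<Rightarrow> (nat \<Rightarrow> 'd) \<Rightarrow> nat \<Rightarrow> (nat \<Rightarrow> nat)
                         \<Rightarrow> (real^'d \<Rightarrow> real) \<Rightarrow> real \<Rightarrow> real \<Rightarrow> real \<Rightarrow> real \<Rightarrow> real \<Rightarrow> nat
                         \<Rightarrow> nat \<Rightarrow> (nat \<Rightarrow> real^'d) \<Rightarrow> bool" where
  "vnpg_prefix v n N idx r rs f lam Lmin Lmax tau c M l y \<longleftrightarrow>
     y 0 \<in> Omega v n N idx r rs \<and>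
     (\<forall>l'<l. \<exists>Lb. vnpg_step v n N idx r rs f lam Lmin Lmax tau c M y l' Lb)"

definition vnpg_run :: "variant \<Rightarrow> nat \<Rightarrow> nat \<Rightarrow> (nat \<Rightarrow> 'd) \<Rightarrow> nat \<Rightarrow> (nat \<Rightarrow> nat)
                         \<Rightarrow> (real^'d \<Rightarrow> real) \<Rightarrow> real \<Rightarrow> real \<Rightarrow> real \<Rightarrow> real \<Rightarrow> real \<Rightarrow> nat
                         \<Rightarrow> (nat \<Rightarrow> real^'d) \<Rightarrow> (nat \<Rightarrow> real) \<Rightarrow> bool" where
  "vnpg_run v n N idx r rs f lam Lmin Lmax tau c M y Lbar \<longleftrightarrow>
     y 0 \<in> Omega v n N idx r rs \<and>
     (\<forall>l. vnpg_step v n N idx r rs f lam Lmin Lmax tau c M y l (Lbar l))"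

definition stat_set :: "variant \<Rightarrow> nat \<Rightarrow> nat \<Rightarrow> (nat \<Rightarrow> 'd) \<Rightarrow> nat \<Rightarrow> (nat \<Rightarrow> nat)
                        \<Rightarrow> (real^'d \<Rightarrow> real) \<Rightarrow> real \<Rightarrow> real^'d \<Rightarrow> real^'d \<Rightarrow> (real^'d) set" where
  "stat_set v n N idx r rs f lam yl ynext =
     {grad f yl + w + (\<Sum>i<kk v N. (1 / lam) *\<^sub>R
                          madj (AA v n N idx r rs i) (AA v n N idx r rs i yl - Y i)) | w Y.
        w \<in> normal_cone (Omega v n N idx r rs) ynext \<and>
        (\<forall>i<kk v N. Y i \<in> mproj (CC v n N r rs i) (AA v n N idx r rs i yl))}"

end

theory Submission
  imports Defs
begin

lemma grad_unique:
  fixes \<phi> :: "real^'d \<Rightarrow> real"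
  assumes "(\<phi> has_derivative (\<lambda>h. g \<bullet> h)) (at x)"
  shows "grad \<phi> x = g"
  unfolding grad_def
proof (rule the_equality)
  show "(\<phi> has_derivative (\<lambda>h. g \<bullet> h)) (at x)" by (fact assms)
  fix g' assume "(\<phi> has_derivative (\<lambda>h. g' \<bullet> h)) (at x)"
  then have "(\<lambda>h. g' \<bullet> h) = (\<lambda>h. g \<bullet> h)" using has_derivative_unique assms by blast
  then show "g' = g" by (metis vector_eq_rdot)
qed

lemma grad_works:
  fixes f :: "real^'d \<Rightarrow> real"
  assumes "f differentiable (at x)"
  shows "(f has_derivative (\<lambda>h. grad f x \<bullet> h)) (at x)"
proof -
  obtain D where D: "(f has_derivative D) (at x)" using assms differentiable_def by blast
  define g where "g = (\<Sum>b\<in>Basis. D b *\<^sub>R b)"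
  have lin: "linear D" using has_derivative_linear[OF D] .
  have Dg: "D = (\<lambda>h. g \<bullet> h)"
  proof
    fix h
    have "D h = D h \<bullet> (1::real)" by simp
    also have "\<dots> = (\<Sum>b\<in>Basis. (h \<bullet> b) * (D b \<bullet> 1))" by (rule Linear_Algebra.linear_componentwise[OF lin])
    also have "\<dots> = g \<bullet> h" by (auto simp: g_def inner_sum_right intro!: sum.cong simp: inner_commute)
    finally show "D h = g \<bullet> h" .
  qed
  have "grad f x = g" using D Dg grad_unique by metis
  then show ?thesis using D Dg by simp
qed

lemma if_times_zero: "(if c then a else 0) * x = (if c then a * x else (0::real))" by simp

lemma vec_nth_deriv[derivative_intros]: "((\<lambda>x. x $ i) has_derivative (\<lambda>x. x $ i)) F"
  by (rule bounded_linear_imp_has_derivative) (rule bounded_linear_vec_nth)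

definition coordmat :: "nat \<Rightarrow> nat \<Rightarrow> (nat \<times> nat \<Rightarrow> 'd) \<Rightarrow> real^'d \<Rightarrow> real Matrix.mat" where
  "coordmat p q \<phi> y = Matrix.mat p q (\<lambda>ab. y $ \<phi> ab)"

lemma coordmat_carrier[simp]: "coordmat p q \<phi> y \<in> carrier_mat p q"
  by (simp add: coordmat_def)

lemma coordmat_dims[simp]: "dim_row (coordmat p q \<phi> y) = p" "dim_col (coordmat p q \<phi> y) = q"
  by (simp_all add: coordmat_def)

lemma coordmat_index[simp]: "a < p \<Longrightarrow> b < q \<Longrightarrow> coordmat p q \<phi> y $$ (a,b) = y $ \<phi> (a,b)"
  by (simp add: coordmat_def)

lemma fro_sq: "M \<in> carrier_mat p q \<Longrightarrow> (fro M)\<^sup>2 = (\<Sum>a<p. \<Sum>b<q. (M $$ (a,b))\<^sup>2)"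
  unfolding fro_def by (simp add: sum_nonneg)

lemma minner_coord: "minner (coordmat p q \<phi> x) Y = (\<Sum>a<p. \<Sum>b<q. x $ \<phi> (a,b) * Y $$ (a,b))"
  unfolding minner_def by simp

lemma madj_coord:
  fixes \<phi> :: "nat \<times> nat \<Rightarrow> 'd::finite"
  shows "madj (coordmat p q \<phi>) Y \<bullet> x = (\<Sum>a<p. \<Sum>b<q. x $ \<phi> (a,b) * Y $$ (a,b))"
proof -
  define z :: "real^'d" where "z = (\<chi> t. \<Sum>a<p. \<Sum>b<q. (if \<phi> (a,b) = t then Y $$ (a,b) else 0))"
  have zx: "z \<bullet> x = (\<Sum>a<p. \<Sum>b<q. x $ \<phi> (a,b) * Y $$ (a,b))" for x
  proof -
    have "z \<bullet> x = (\<Sum>t\<in>UNIV. (\<Sum>a<p. \<Sum>b<q. (if \<phi> (a,b) = t then Y $$ (a,b) else 0)) * x $ t)"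
      by (simp add: z_def inner_vec_def)
    also have "\<dots> = (\<Sum>t\<in>UNIV. \<Sum>a<p. \<Sum>b<q. (if \<phi> (a,b) = t then Y $$ (a,b) * x $ t else 0))"
      by (simp add: sum_distrib_right if_times_zero)
    also have "\<dots> = (\<Sum>a<p. \<Sum>b<q. \<Sum>t\<in>UNIV. (if \<phi> (a,b) = t then Y $$ (a,b) * x $ t else 0))"
      apply (subst sum.swap[where A="UNIV::'d set"]) apply (rule sum.cong, rule refl) apply (subst sum.swap[where A="UNIV::'d set"]) by simp
    also have "\<dots> = (\<Sum>a<p. \<Sum>b<q. x $ \<phi> (a,b) * Y $$ (a,b))"
      by (simp add: mult.commute)
    finally show ?thesis .
  qed
  have "madj (coordmat p q \<phi>) Y = z"
    unfolding madj_def
  proof (rule the_equality)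
    show "\<forall>x. z \<bullet> x = minner (coordmat p q \<phi> x) Y" by (simp add: zx minner_coord)
    fix z' assume "\<forall>x. z' \<bullet> x = minner (coordmat p q \<phi> x) Y"
    then have "\<forall>x. z' \<bullet> x = z \<bullet> x" by (simp add: zx minner_coord)
    then show "z' = z" by (metis vector_eq_rdot)
  qed
  then show ?thesis using zx by simp
qed

lemma madj_diff:
  assumes "X \<in> carrier_mat p q" "Y \<in> carrier_mat p q"
  shows "madj (coordmat p q \<phi>) (X - Y) = madj (coordmat p q \<phi>) X - madj (coordmat p q \<phi>) Y"
proof -
  have "\<forall>x. madj (coordmat p q \<phi>) (X - Y) \<bullet> x = (madj (coordmat p q \<phi>) X - madj (coordmat p q \<phi>) Y) \<bullet> x"
  proof
    fix x
    have "madj (coordmat p q \<phi>) (X - Y) \<bullet> x = (\<Sum>a<p. \<Sum>b<q. x $ \<phi> (a,b) * (X $$ (a,b) - Y $$ (a,b)))"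
      using assms by (simp add: madj_coord)
    also have "\<dots> = (\<Sum>a<p. \<Sum>b<q. x $ \<phi> (a,b) * X $$ (a,b)) - (\<Sum>a<p. \<Sum>b<q. x $ \<phi> (a,b) * Y $$ (a,b))"
      by (simp add: right_diff_distrib sum_subtractf)
    finally show "madj (coordmat p q \<phi>) (X - Y) \<bullet> x = (madj (coordmat p q \<phi>) X - madj (coordmat p q \<phi>) Y) \<bullet> x"
      by (simp add: inner_diff_left madj_coord)
  qed
  then show ?thesis by (metis vector_eq_rdot)
qed

lemma fro_coord_deriv:
  "((\<lambda>y. (fro (coordmat p q \<phi> y))\<^sup>2) has_derivative
     (\<lambda>h. (2 *\<^sub>R madj (coordmat p q \<phi>) (coordmat p q \<phi> y)) \<bullet> h)) (at y)"
proof -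
  have e: "(\<lambda>y. (fro (coordmat p q \<phi> y))\<^sup>2) = (\<lambda>y. \<Sum>a<p. \<Sum>b<q. (y $ \<phi> (a,b))\<^sup>2)"
    by (simp add: fro_sq[OF coordmat_carrier])
  have d: "((\<lambda>y. \<Sum>a<p. \<Sum>b<q. (y $ \<phi> (a,b))\<^sup>2) has_derivative
     (\<lambda>h. \<Sum>a<p. \<Sum>b<q. 2 * (y $ \<phi> (a,b)) * (h $ \<phi> (a,b)))) (at y)"
    by (auto intro!: derivative_eq_intros simp: power2_eq_square mult_ac)
  have f: "(\<lambda>h. \<Sum>a<p. \<Sum>b<q. 2 * (y $ \<phi> (a,b)) * (h $ \<phi> (a,b))) =
       (\<lambda>h. (2 *\<^sub>R madj (coordmat p q \<phi>) (coordmat p q \<phi> y)) \<bullet> h)"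
    by (auto simp: madj_coord sum_distrib_left intro!: sum.cong)
  show ?thesis using d unfolding e f .
qed

lemma descent:
  fixes f :: "real^'d \<Rightarrow> real"
  assumes fd: "\<And>y. f differentiable (at y)" and lip: "L-lipschitz_on UNIV (grad f)"
  shows "f u - f y - grad f y \<bullet> (u - y) \<le> L * (norm (u - y))\<^sup>2"
proof -
  define g where "g x = f x - grad f y \<bullet> x" for x
  have L0: "0 \<le> L" using lip lipschitz_on_nonneg by blast
  have der: "(g has_derivative (\<lambda>h. (grad f x - grad f y) \<bullet> h)) (at x within closed_segment y u)" for x
  proof -
    have "(g has_derivative (\<lambda>h. grad f x \<bullet> h - grad f y \<bullet> h)) (at x)"
      unfolding g_def by (auto intro!: derivative_eq_intros grad_works fd)
    then show ?thesis by (auto simp: inner_diff_left intro: has_derivative_at_withinI)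
  qed
  have bnd: "onorm (\<lambda>h. (grad f x - grad f y) \<bullet> h) \<le> L * norm (u - y)" if x: "x \<in> closed_segment y u" for x
  proof (rule onorm_le)
    fix h
    have "norm ((grad f x - grad f y) \<bullet> h) \<le> norm (grad f x - grad f y) * norm h"
      using Cauchy_Schwarz_ineq2 by simp
    also have "norm (grad f x - grad f y) \<le> L * norm (x - y)"
      using lip unfolding lipschitz_on_def by (simp add: dist_norm)
    also have "norm (x - y) \<le> norm (u - y)"
      using x by (metis dist_commute dist_in_closed_segment dist_norm)
    finally show "norm ((grad f x - grad f y) \<bullet> h) \<le> L * norm (u - y) * norm h"
      using L0 by (simp add: mult_right_mono mult_left_mono)
  qed
  have "norm (g u - g y) \<le> L * norm (u - y) * norm (u - y)"
    by (rule differentiable_bound[OF convex_closed_segment der bnd]) auto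
  moreover have "g u - g y = f u - f y - grad f y \<bullet> (u - y)"
    by (simp add: g_def inner_diff_right)
  ultimately show ?thesis by (simp add: power2_eq_square mult.assoc)
qed

lemma fro_nonneg: "0 \<le> fro M"
  unfolding fro_def by (simp add: sum_nonneg)

lemma mdist_le: "Y \<in> C \<Longrightarrow> mdist X C \<le> fro (X - Y)"
  unfolding mdist_def by (rule cInf_lower) (auto intro!: bdd_belowI[where m=0] fro_nonneg)

lemma mdist_nonneg: "Y \<in> C \<Longrightarrow> 0 \<le> mdist X C"
  unfolding mdist_def by (rule cInf_greatest) (auto intro!: fro_nonneg)

lemma comp_sq_le: "(x $ i)\<^sup>2 \<le> (norm (x :: real^'d))\<^sup>2"
  by (metis abs_le_square_iff component_le_norm_cart real_norm_def abs_norm_cancel)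

lemma dist_step:
  fixes \<phi> :: "nat \<times> nat \<Rightarrow> 'd::finite"
  assumes C: "C \<subseteq> carrier_mat p q" and Y: "Y \<in> mproj C (coordmat p q \<phi> y)"
  shows "(mdist (coordmat p q \<phi> u) C)\<^sup>2 - (mdist (coordmat p q \<phi> y) C)\<^sup>2
     \<le> real (p * q) * (norm (u - y))\<^sup>2
        + 2 * (madj (coordmat p q \<phi>) (coordmat p q \<phi> y) \<bullet> (u - y) - madj (coordmat p q \<phi>) Y \<bullet> (u - y))"
proof -
  have YC: "Y \<in> C" and Yd: "fro (coordmat p q \<phi> y - Y) = mdist (coordmat p q \<phi> y) C"
    using Y by (auto simp: mproj_def)
  have Yc: "Y \<in> carrier_mat p q" using YC C by auto
  have "(mdist (coordmat p q \<phi> u) C)\<^sup>2 \<le> (fro (coordmat p q \<phi> u - Y))\<^sup>2"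
    by (rule power_mono[OF mdist_le[OF YC] mdist_nonneg[OF YC]])
  also have "(fro (coordmat p q \<phi> u - Y))\<^sup>2 = (\<Sum>a<p. \<Sum>b<q. (u $ \<phi> (a,b) - Y $$ (a,b))\<^sup>2)"
    using Yc by (subst fro_sq[where p=p and q=q]) auto
  finally have 1: "(mdist (coordmat p q \<phi> u) C)\<^sup>2 \<le> (\<Sum>a<p. \<Sum>b<q. (u $ \<phi> (a,b) - Y $$ (a,b))\<^sup>2)" .
  have 2: "(mdist (coordmat p q \<phi> y) C)\<^sup>2 = (\<Sum>a<p. \<Sum>b<q. (y $ \<phi> (a,b) - Y $$ (a,b))\<^sup>2)"
    unfolding Yd[symmetric] using Yc by (subst fro_sq[where p=p and q=q]) auto
  have 3: "madj (coordmat p q \<phi>) (coordmat p q \<phi> y) \<bullet> (u - y) - madj (coordmat p q \<phi>) Y \<bullet> (u - y)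
      = (\<Sum>a<p. \<Sum>b<q. (u - y) $ \<phi> (a,b) * (y $ \<phi> (a,b) - Y $$ (a,b)))"
    by (simp add: madj_coord right_diff_distrib sum_subtractf)
  have 4: "(\<Sum>a<p. \<Sum>b<q. (u $ \<phi> (a,b) - Y $$ (a,b))\<^sup>2) - (\<Sum>a<p. \<Sum>b<q. (y $ \<phi> (a,b) - Y $$ (a,b))\<^sup>2)
       - 2 * (\<Sum>a<p. \<Sum>b<q. (u - y) $ \<phi> (a,b) * (y $ \<phi> (a,b) - Y $$ (a,b)))
     = (\<Sum>a<p. \<Sum>b<q. ((u - y) $ \<phi> (a,b))\<^sup>2)"
    by (simp add: sum_subtractf[symmetric] sum_distrib_left power2_eq_square algebra_simps)
  have 5: "(\<Sum>a<p. \<Sum>b<q. ((u - y) $ \<phi> (a,b))\<^sup>2) \<le> (\<Sum>a<p. \<Sum>b<q. (norm (u - y))\<^sup>2)"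
    by (intro sum_mono comp_sq_le)
  have 6: "(\<Sum>a<p. \<Sum>b<q. (norm (u - y))\<^sup>2) = real (p * q) * (norm (u - y))\<^sup>2" by simp
  show ?thesis unfolding 3 using 1 2 4 5 6 by linarith
qed


lemma reg_cone_scale:
  assumes "v \<in> reg_normal_cone S x" "0 < a"
  shows "a *\<^sub>R v \<in> reg_normal_cone S x"
proof -
  have xS: "x \<in> S" using assms(1) by (simp add: reg_normal_cone_def split: if_splits)
  have H: "\<forall>e>0. \<exists>d>0. \<forall>x'\<in>S. norm (x' - x) < d \<longrightarrow> v \<bullet> (x' - x) \<le> e * norm (x' - x)"
    using assms(1) xS by (simp add: reg_normal_cone_def)
  have "\<exists>d>0. \<forall>x'\<in>S. norm (x' - x) < d \<longrightarrow> (a *\<^sub>R v) \<bullet> (x' - x) \<le> e * norm (x' - x)" if e: "e > 0" for e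
  proof -
    obtain d where d: "d > 0" "\<forall>x'\<in>S. norm (x' - x) < d \<longrightarrow> v \<bullet> (x' - x) \<le> (e / a) * norm (x' - x)"
    proof -
      have "e / a > 0" using e assms(2) by simp
      then show ?thesis using H that by blast
    qed
    have "(a *\<^sub>R v) \<bullet> (x' - x) \<le> e * norm (x' - x)" if "x' \<in> S" "norm (x' - x) < d" for x'
    proof -
      have h: "v \<bullet> (x' - x) \<le> (e / a) * norm (x' - x)" using d that by blast
      have "a * (v \<bullet> (x' - x)) \<le> a * ((e / a) * norm (x' - x))"
        by (rule mult_left_mono[OF h]) (use assms(2) in simp)
      moreover have "a * ((e / a) * norm (x' - x)) = e * norm (x' - x)" using assms(2) by simp
      ultimately show ?thesis by simp
    qed
    then show ?thesis using d(1) by blast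
  qed
  then show ?thesis using xS by (simp add: reg_normal_cone_def)
qed

lemma cone_scale:
  assumes "v \<in> normal_cone S x" "0 < a"
  shows "a *\<^sub>R v \<in> normal_cone S x"
proof -
  have xS: "x \<in> S" using assms(1) by (simp add: normal_cone_def split: if_splits)
  obtain xs vs where H: "\<forall>m. xs m \<in> S \<and> vs m \<in> reg_normal_cone S (xs m)" "xs \<longlonglongrightarrow> x" "vs \<longlonglongrightarrow> v"
    using assms(1) xS by (auto simp: normal_cone_def)
  have "\<forall>m. xs m \<in> S \<and> (\<lambda>m. a *\<^sub>R vs m) m \<in> reg_normal_cone S (xs m)"
    using H(1) reg_cone_scale assms(2) by blast
  moreover have "(\<lambda>m. a *\<^sub>R vs m) \<longlonglongrightarrow> a *\<^sub>R v" using H(3) by (intro tendsto_intros)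
  ultimately show ?thesis using xS H(2) unfolding normal_cone_def
    by (simp only: if_True) (rule CollectI, rule exI[of _ xs], rule exI[of _ "\<lambda>m. a *\<^sub>R vs m"], blast)
qed

lemma nonmono1:
  fixes \<phi> d :: "nat \<Rightarrow> real"
  assumes step: "\<And>l. \<phi> (Suc l) \<le> Max (\<phi> ` {l-M..l}) - d l" and dpos: "\<And>l. 0 \<le> d l"
  shows "\<phi> l \<le> \<phi> 0"
proof -
  have "\<forall>j\<le>l. \<phi> j \<le> \<phi> 0"
  proof (induction l)
    case 0 then show ?case by simp
  next
    case (Suc l)
    have "Max (\<phi> ` {l-M..l}) \<le> \<phi> 0" using Suc.IH by (subst Max_le_iff) auto
    then have "\<phi> (Suc l) \<le> \<phi> 0" using step[of l] dpos[of l] by linarith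
    then show ?case using Suc.IH le_Suc_eq by blast
  qed
  then show ?thesis by simp
qed

lemma nonmono2:
  fixes \<phi> d :: "nat \<Rightarrow> real"
  assumes step: "\<And>l. \<phi> (Suc l) \<le> Max (\<phi> ` {l-M..l}) - d l" and pos: "\<And>l. 0 \<le> \<phi> l"
    and \<delta>: "0 < \<delta>"
  shows "\<exists>l. d l \<le> \<delta>"
proof (rule ccontr)
  assume "\<not> (\<exists>l. d l \<le> \<delta>)"
  then have big: "\<And>l. \<delta> < d l" by (meson not_le)
  define W where "W l = Max (\<phi> ` {l-M..l})" for l
  have Wge: "\<phi> j \<le> W l" if "l - M \<le> j" "j \<le> l" for j l
    unfolding W_def using that by (intro Max_ge) auto
  have A: "\<forall>t'\<le>t. t' \<le> M \<longrightarrow> \<phi> (l + 1 + t') \<le> W l - \<delta>" for l t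
  proof (induction t)
    case 0
    have "\<phi> (Suc l) \<le> W l - d l" using step[of l] by (simp add: W_def)
    then show ?case using big[of l] by simp
  next
    case (Suc t)
    have "\<phi> (l + 1 + Suc t) \<le> W l - \<delta>" if tM: "Suc t \<le> M"
    proof -
      have "W (l + Suc t) \<le> W l"
        unfolding W_def[of "l + Suc t"]
      proof (subst Max_le_iff, simp, simp, intro ballI)
        fix z assume "z \<in> \<phi> ` {l + Suc t - M..l + Suc t}"
        then obtain j where j: "l + Suc t - M \<le> j" "j \<le> l + Suc t" "z = \<phi> j" by auto
        show "z \<le> W l"
        proof (cases "j \<le> l")
          case True
          then show ?thesis using j Wge[of l j] by simp
        next
          case False
          define t' where "t' = j - l - 1"
          have t': "j = l + 1 + t'" "t' \<le> t" using False j(2) unfolding t'_def by auto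
          have "\<phi> j \<le> W l - \<delta>" using Suc.IH t' tM by auto
          then show ?thesis using j(3) \<delta> by simp
        qed
      qed
      moreover have "\<phi> (Suc (l + Suc t)) \<le> W (l + Suc t) - d (l + Suc t)"
        using step[of "l + Suc t"] by (simp add: W_def)
      ultimately show ?thesis using big[of "l + Suc t"] by simp
    qed
    then show ?case using Suc.IH le_Suc_eq by auto
  qed
  have B: "W (l + Suc M) \<le> W l - \<delta>" for l
    unfolding W_def[of "l + Suc M"]
  proof (subst Max_le_iff, simp, simp, intro ballI)
    fix z assume "z \<in> \<phi> ` {l + Suc M - M..l + Suc M}"
    then obtain j where j: "l + 1 \<le> j" "j \<le> l + Suc M" "z = \<phi> j" by auto
    define t where "t = j - l - 1"
    have "j = l + 1 + t" "t \<le> M" using j unfolding t_def by auto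
    then show "z \<le> W l - \<delta>" using A[of M l] j(3) by auto
  qed
  have C: "W (m * Suc M) \<le> W 0 - real m * \<delta>" for m
  proof (induction m)
    case 0 then show ?case by simp
  next
    case (Suc m)
    have "W (m * Suc M + Suc M) \<le> W (m * Suc M) - \<delta>" by (rule B)
    then show ?case using Suc.IH by (simp add: algebra_simps)
  qed
  obtain m where m: "W 0 < real m * \<delta>" using ex_less_of_nat_mult[OF \<delta>] by blast
  have "0 \<le> W (m * Suc M)" using Wge[of "m * Suc M" "m * Suc M"] pos[of "m * Suc M"] by simp
  then show False using C[of m] m by simp
qed

locale ctx =
  fixes v :: variant and n N r :: nat and rs :: "nat \<Rightarrow> nat" and idx :: "nat \<Rightarrow> 'd::finite"
    and P Q :: "nat \<Rightarrow> nat" and \<Phi> :: "nat \<Rightarrow> nat \<times> nat \<Rightarrow> 'd"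
    and f :: "real^'d \<Rightarrow> real" and lam Lf :: real
  assumes struct: "\<And>i. i < kk v N \<Longrightarrow> AA v n N idx r rs i = coordmat (P i) (Q i) (\<Phi> i)"
    and Csub: "\<And>i. i < kk v N \<Longrightarrow> CC v n N r rs i \<subseteq> carrier_mat (P i) (Q i)"
    and fdiff: "\<And>y. f differentiable (at y)"
    and lip: "Lf-lipschitz_on UNIV (grad f)"
    and lam: "0 < lam"
    and fpos: "\<And>y. 0 \<le> f y"
begin

abbreviation "kc \<equiv> kk v N"
abbreviation "Ac \<equiv> AA v n N idx r rs"
abbreviation "Cc \<equiv> CC v n N r rs"
abbreviation "Om \<equiv> Omega v n N idx r rs"

definition "R z = f z + (\<Sum>i<kc. 1/(2*lam) * (mdist (Ac i z) (Cc i))\<^sup>2)"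
definition "K = (\<Sum>i<kc. real (P i * Q i) / (2*lam))"

lemma Flam_R: "z \<in> Om \<Longrightarrow> Flam v n N idx r rs f lam z = ereal (R z)"
  unfolding Flam_def indic_def R_def by simp

lemma R_nonneg: "0 \<le> R z"
  unfolding R_def using fpos lam by (auto intro!: add_nonneg_nonneg sum_nonneg)

lemma hgrad: "grad (hfun v n N idx r rs f lam) y = grad f y + (\<Sum>i<kc. (1/lam) *\<^sub>R madj (Ac i) (Ac i y))"
proof (rule grad_unique)
  have e: "hfun v n N idx r rs f lam = (\<lambda>y. f y + (\<Sum>i<kc. 1 / (2 * lam) * (fro (Ac i y))\<^sup>2))"
    by (rule ext) (simp add: hfun_def)
  have di: "((\<lambda>y. 1/(2*lam) * (fro (Ac i y))\<^sup>2) has_derivative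
            (\<lambda>h. 1/(2*lam) * ((2 *\<^sub>R madj (Ac i) (Ac i y)) \<bullet> h))) (at y)" if "i \<in> {..<kc}" for i
  proof -
    have i: "i < kc" using that by simp
    show ?thesis unfolding struct[OF i] by (rule has_derivative_mult_right[OF fro_coord_deriv])
  qed
  have "(hfun v n N idx r rs f lam has_derivative
      (\<lambda>h. grad f y \<bullet> h + (\<Sum>i<kc. 1/(2*lam) * ((2 *\<^sub>R madj (Ac i) (Ac i y)) \<bullet> h)))) (at y)"
    unfolding e by (rule has_derivative_add[OF grad_works[OF fdiff] has_derivative_sum]) (use di in auto)
  moreover have "(\<lambda>h. grad f y \<bullet> h + (\<Sum>i<kc. 1/(2*lam) * ((2 *\<^sub>R madj (Ac i) (Ac i y)) \<bullet> h)))
     = (\<lambda>h. (grad f y + (\<Sum>i<kc. (1/lam) *\<^sub>R madj (Ac i) (Ac i y))) \<bullet> h)"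
    using lam by (auto simp: inner_add_left inner_sum_left intro!: ext sum.cong)
  ultimately show "(hfun v n N idx r rs f lam has_derivative
      (\<lambda>h. (grad f y + (\<Sum>i<kc. (1/lam) *\<^sub>R madj (Ac i) (Ac i y))) \<bullet> h)) (at y)" by simp
qed

lemma core:
  assumes xi: "xi_ok v n N idx r rs lam y xi" and L: "0 < L"
    and cand: "candidate v n N idx r rs f lam y xi L u"
  shows "u \<in> Om" "R u \<le> R y + (Lf + K - L/2) * (norm (u - y))\<^sup>2"
proof -
  obtain Y where Y: "\<forall>i<kc. Y i \<in> mproj (Cc i) (Ac i y)"
    and xieq: "xi = (\<Sum>i<kc. (1/lam) *\<^sub>R madj (Ac i) (Y i))"
    using xi unfolding xi_ok_def by blast
  define G where "G = grad (hfun v n N idx r rs f lam) y"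
  define g where "g = G - xi"
  define x where "x = y - (1/L) *\<^sub>R g"
  define d where "d = u - y"
  define E where "E i = madj (Ac i) (Ac i y) \<bullet> d - madj (Ac i) (Y i) \<bullet> d" for i
  have uO: "u \<in> Om" and nx: "norm (u - x) \<le> norm (y - x)"
    using cand unfolding candidate_def pproj_def x_def g_def G_def by auto
  show "u \<in> Om" by (fact uO)
  have "(norm (u - x))\<^sup>2 \<le> (norm (y - x))\<^sup>2" using nx by (simp add: power_mono)
  moreover have "u - x = d + (1/L) *\<^sub>R g" "y - x = (1/L) *\<^sub>R g" by (auto simp: x_def d_def)
  ultimately have "(norm (d + (1/L) *\<^sub>R g))\<^sup>2 \<le> (norm ((1/L) *\<^sub>R g))\<^sup>2" by simp
  moreover have "d \<bullet> ((1/L) *\<^sub>R g) = ((norm (d + (1/L) *\<^sub>R g))\<^sup>2 - (norm d)\<^sup>2 - (norm ((1/L) *\<^sub>R g))\<^sup>2) / 2"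
    by (rule dot_norm)
  moreover have "d \<bullet> ((1/L) *\<^sub>R g) = (1/L) * (g \<bullet> d)" by (simp add: inner_commute)
  moreover have aux: "z3 + 2*z5 \<le> (0::real)" if "z1 \<le> z2" "z4 = (z1 - z3 - z2)/2" "z4 = z5" for z1 z2 z3 z4 z5 :: real
    using that by simp
  ultimately have "(norm d)\<^sup>2 + 2 * ((1/L) * (g \<bullet> d)) \<le> 0"
    by blast
  then have gd: "g \<bullet> d \<le> - (L/2) * (norm d)\<^sup>2"
    using L by (simp add: field_simps)
  have S3: "g \<bullet> d = grad f y \<bullet> d + (\<Sum>i<kc. (1/lam) * E i)"
    by (simp add: g_def G_def hgrad xieq E_def inner_diff_left inner_add_left inner_sum_left
        right_diff_distrib sum_subtractf)
  have step: "(mdist (Ac i u) (Cc i))\<^sup>2 - (mdist (Ac i y) (Cc i))\<^sup>2 \<le> real (P i * Q i) * (norm d)\<^sup>2 + 2 * E i"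
    if i: "i < kc" for i
  proof -
    have Y': "Y i \<in> mproj (Cc i) (coordmat (P i) (Q i) (\<Phi> i) y)" 
    proof -
      have "Y i \<in> mproj (Cc i) (Ac i y)" using Y i by blast
      then show ?thesis unfolding struct[OF i] .
    qed
    show ?thesis using dist_step[OF Csub[OF i] Y', of u] unfolding E_def d_def struct[OF i] .
  qed
  have S1: "(\<Sum>i<kc. 1/(2*lam) * (mdist (Ac i u) (Cc i))\<^sup>2) - (\<Sum>i<kc. 1/(2*lam) * (mdist (Ac i y) (Cc i))\<^sup>2)
      \<le> (\<Sum>i<kc. 1/(2*lam) * (real (P i * Q i) * (norm d)\<^sup>2 + 2 * E i))"
    unfolding sum_subtractf[symmetric] right_diff_distrib[symmetric]
    using lam step by (intro sum_mono mult_left_mono) auto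
  have S2: "(\<Sum>i<kc. 1/(2*lam) * (real (P i * Q i) * (norm d)\<^sup>2 + 2 * E i)) = K * (norm d)\<^sup>2 + (\<Sum>i<kc. (1/lam) * E i)"
    unfolding K_def using lam by (simp add: sum.distrib sum_distrib_right distrib_left)
  have D: "f u - f y - grad f y \<bullet> d \<le> Lf * (norm d)\<^sup>2"
    unfolding d_def by (rule descent[OF fdiff lip])
  have "R u - R y = f u - f y + ((\<Sum>i<kc. 1/(2*lam) * (mdist (Ac i u) (Cc i))\<^sup>2) - (\<Sum>i<kc. 1/(2*lam) * (mdist (Ac i y) (Cc i))\<^sup>2))"
    by (simp add: R_def)
  then have "R u - R y \<le> (Lf + K - L/2) * (norm d)\<^sup>2"
    using S1 S2 S3 gd D by (simp add: algebra_simps)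
  then show "R u \<le> R y + (Lf + K - L/2) * (norm (u - y))\<^sup>2" by (simp add: d_def)
qed

lemma cand_Om: "candidate v n N idx r rs f lam y xi L u \<Longrightarrow> u \<in> Om"
  unfolding candidate_def pproj_def by auto

definition "Lstar (c::real) = 2 * (Lf + K) + c"

lemma accept_if:
  assumes "y l \<in> Om" "u \<in> Om" "R u \<le> R (y l) - c/2 * (norm (u - y l))\<^sup>2"
  shows "accept v n N idx r rs f lam c M y l u"
proof -
  define S where "S = (\<lambda>j. Flam v n N idx r rs f lam (y j)) ` {l - M..l}"
  have "Flam v n N idx r rs f lam (y l) \<in> S" unfolding S_def by auto
  then have "Flam v n N idx r rs f lam (y l) \<le> Max S" unfolding S_def by (intro Max_ge) auto
  then have m: "ereal (R (y l)) \<le> Max S" using Flam_R[OF assms(1)] by simp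
  have "ereal (R u) \<le> ereal (R (y l) - c/2 * (norm (u - y l))\<^sup>2)" using assms(3) by simp
  also have "\<dots> = ereal (R (y l)) - ereal (c/2 * (norm (u - y l))\<^sup>2)" by simp
  also have "\<dots> \<le> Max S - ereal (c/2 * (norm (u - y l))\<^sup>2)"
    by (rule ereal_minus_mono[OF m order_refl])
  finally show ?thesis unfolding accept_def S_def[symmetric] using Flam_R[OF assms(2)] by simp
qed

lemma accept_large:
  assumes xi: "xi_ok v n N idx r rs lam (y l) xi" and L: "Lstar c \<le> L" "0 < L"
    and cand: "candidate v n N idx r rs f lam (y l) xi L u" and yO: "y l \<in> Om"
  shows "accept v n N idx r rs f lam c M y l u"
proof (rule accept_if[where y=y and l=l, OF yO core(1)[OF xi L(2) cand]])
  have "R u \<le> R (y l) + (Lf + K - L/2) * (norm (u - y l))\<^sup>2" by (rule core(2)[OF xi L(2) cand])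
  moreover have "(Lf + K - L/2) * (norm (u - y l))\<^sup>2 \<le> (- c/2) * (norm (u - y l))\<^sup>2"
    by (rule mult_right_mono) (use L(1) in \<open>auto simp: Lstar_def\<close>)
  ultimately show "R u \<le> R (y l) - c/2 * (norm (u - y l))\<^sup>2" by simp
qed

lemma prefix_Om:
  assumes "vnpg_prefix v n N idx r rs f lam Lmin Lmax tau c M l y"
  shows "y l \<in> Om"
proof (cases l)
  case 0 then show ?thesis using assms by (simp add: vnpg_prefix_def)
next
  case (Suc l')
  then have "\<exists>Lb. vnpg_step v n N idx r rs f lam Lmin Lmax tau c M y l' Lb"
    using assms by (simp add: vnpg_prefix_def)
  then show ?thesis using Suc cand_Om unfolding vnpg_step_def by force
qed

lemma run_Om:
  assumes "vnpg_run v n N idx r rs f lam Lmin Lmax tau c M y Lbar"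
  shows "y l \<in> Om"
proof (cases l)
  case 0 then show ?thesis using assms by (simp add: vnpg_run_def)
next
  case (Suc l')
  then have "vnpg_step v n N idx r rs f lam Lmin Lmax tau c M y l' (Lbar l')"
    using assms by (simp add: vnpg_run_def)
  then show ?thesis using Suc cand_Om unfolding vnpg_step_def by force
qed

lemma part1:
  assumes "0 < Lmin" "1 < tau"
  shows "\<forall>l y xi L0 u.
        vnpg_prefix v n N idx r rs f lam Lmin Lmax tau c M l y \<and>
        xi_ok v n N idx r rs lam (y l) xi \<and> Lmin \<le> L0 \<and> L0 \<le> Lmax \<and>
        (\<forall>i. candidate v n N idx r rs f lam (y l) xi (L0 * tau ^ i) (u i))
        \<longrightarrow> (\<exists>i. accept v n N idx r rs f lam c M y l (u i))"
proof (intro allI impI)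
  fix l y xi L0 u
  assume H: "vnpg_prefix v n N idx r rs f lam Lmin Lmax tau c M l y \<and>
        xi_ok v n N idx r rs lam (y l) xi \<and> Lmin \<le> L0 \<and> L0 \<le> Lmax \<and>
        (\<forall>i. candidate v n N idx r rs f lam (y l) xi (L0 * tau ^ i) (u i))"
  have L0: "0 < L0" using H assms by linarith
  obtain i where i: "Lstar c / L0 < tau ^ i" using real_arch_pow[OF assms(2)] by blast
  have "Lstar c < L0 * tau ^ i" using i L0 by (simp add: field_simps)
  moreover have "0 < L0 * tau ^ i" using L0 assms by simp
  ultimately have "accept v n N idx r rs f lam c M y l (u i)"
    using accept_large[of y l xi c "L0 * tau ^ i" "u i" M] H prefix_Om[of Lmin Lmax tau c M l y] by auto
  then show "\<exists>i. accept v n N idx r rs f lam c M y l (u i)" by blast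
qed

lemma Lbar_bound:
  assumes run: "vnpg_run v n N idx r rs f lam Lmin Lmax tau c M y Lbar"
    and "0 < Lmin" "1 < tau"
  shows "0 < Lbar l \<and> Lbar l \<le> max Lmax (tau * Lstar c)"
proof -
  have st: "vnpg_step v n N idx r rs f lam Lmin Lmax tau c M y l (Lbar l)"
    using run by (simp add: vnpg_run_def)
  then obtain xi L0 it u where H:
    "xi_ok v n N idx r rs lam (y l) xi" "Lmin \<le> L0" "L0 \<le> Lmax"
    "\<forall>i\<le>it. candidate v n N idx r rs f lam (y l) xi (L0 * tau ^ i) (u i)"
    "\<forall>i<it. \<not> accept v n N idx r rs f lam c M y l (u i)"
    "Lbar l = L0 * tau ^ it"
    unfolding vnpg_step_def by blast
  have L0: "0 < L0" using H assms by linarith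
  have pos: "0 < Lbar l" using H(6) L0 assms by simp
  show ?thesis
  proof (cases it)
    case 0 then show ?thesis using H pos by simp
  next
    case (Suc j)
    have "L0 * tau ^ j < Lstar c"
    proof (rule ccontr)
      assume "\<not> L0 * tau ^ j < Lstar c"
      then have "Lstar c \<le> L0 * tau ^ j" by simp
      moreover have "0 < L0 * tau ^ j" using L0 assms by simp
      ultimately have "accept v n N idx r rs f lam c M y l (u j)"
        using accept_large[of y l xi c "L0 * tau ^ j" "u j" M] H Suc run_Om[OF run] by auto
      then show False using H(5) Suc by auto
    qed
    then have "tau * (L0 * tau ^ j) \<le> tau * Lstar c" using assms by simp
    then show ?thesis using H(6) Suc pos by (simp add: mult_ac)
  qed
qed

lemma acc_real:
  assumes run: "vnpg_run v n N idx r rs f lam Lmin Lmax tau c M y Lbar"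
  shows "R (y (Suc l)) \<le> Max ((\<lambda>j. R (y j)) ` {l-M..l}) - c/2 * (norm (y (Suc l) - y l))\<^sup>2"
proof -
  have "vnpg_step v n N idx r rs f lam Lmin Lmax tau c M y l (Lbar l)"
    using run by (simp add: vnpg_run_def)
  then have acc: "accept v n N idx r rs f lam c M y l (y (Suc l))"
    unfolding vnpg_step_def by force
  define S where "S = (\<lambda>j. R (y j)) ` {l-M..l}"
  have img: "(\<lambda>j. Flam v n N idx r rs f lam (y j)) ` {l-M..l} = ereal ` S"
    unfolding S_def by (simp add: image_image Flam_R[OF run_Om[OF run]])
  have fin: "finite S" "S \<noteq> {}" unfolding S_def by auto
  have mx: "Max (ereal ` S) = ereal (Max S)"
    by (rule mono_Max_commute[symmetric, OF _ fin]) (simp add: mono_def)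
  have "ereal (R (y (Suc l))) \<le> ereal (Max S) - ereal (c/2 * (norm (y (Suc l) - y l))\<^sup>2)"
    using acc unfolding accept_def img mx using Flam_R[OF run_Om[OF run]] by simp
  then show ?thesis unfolding S_def[symmetric] by simp
qed

lemma stat:
  assumes run: "vnpg_run v n N idx r rs f lam Lmin Lmax tau c M y Lbar"
    and "0 < Lmin" "1 < tau"
  shows "infdist 0 (stat_set v n N idx r rs f lam (y l) (y (Suc l))) \<le> Lbar l * norm (y (Suc l) - y l)"
proof -
  have "vnpg_step v n N idx r rs f lam Lmin Lmax tau c M y l (Lbar l)"
    using run by (simp add: vnpg_run_def)
  then obtain xi L0 it u where H:
    "xi_ok v n N idx r rs lam (y l) xi"
    "\<forall>i\<le>it. candidate v n N idx r rs f lam (y l) xi (L0 * tau ^ i) (u i)"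
    "Lbar l = L0 * tau ^ it" "y (Suc l) = u it"
    unfolding vnpg_step_def by blast
  define Lb where "Lb = Lbar l"
  have Lb: "0 < Lb" using Lbar_bound[OF assms] Lb_def by blast
  have cand: "candidate v n N idx r rs f lam (y l) xi Lb (y (Suc l))"
    using H Lb_def by auto
  obtain Y where Y: "\<forall>i<kc. Y i \<in> mproj (Cc i) (Ac i (y l))"
    and xieq: "xi = (\<Sum>i<kc. (1/lam) *\<^sub>R madj (Ac i) (Y i))"
    using H(1) unfolding xi_ok_def by blast
  define G where "G = grad (hfun v n N idx r rs f lam) (y l)"
  define x where "x = y l - (1/Lb) *\<^sub>R (G - xi)"
  define y' where "y' = y (Suc l)"
  have nc: "x - y' \<in> normal_cone Om y'"
    using cand unfolding candidate_def pproj_def x_def G_def y'_def by auto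
  define w where "w = Lb *\<^sub>R (x - y')"
  have wN: "w \<in> normal_cone Om y'" unfolding w_def by (rule cone_scale[OF nc Lb])
  have weq: "w = Lb *\<^sub>R (y l - y') - (G - xi)"
    using Lb by (simp add: w_def x_def algebra_simps)
  have per: "(1/lam) *\<^sub>R madj (Ac i) (Ac i (y l) - Y i) = (1/lam) *\<^sub>R madj (Ac i) (Ac i (y l)) - (1/lam) *\<^sub>R madj (Ac i) (Y i)"
    if i: "i \<in> {..<kc}" for i
  proof -
    have i': "i < kc" using i by simp
    have "Y i \<in> carrier_mat (P i) (Q i)" using Y Csub[OF i'] i' by (auto simp: mproj_def)
    then show ?thesis unfolding struct[OF i'] by (simp add: madj_diff scaleR_diff_right)
  qed
  have sumeq: "(\<Sum>i<kc. (1/lam) *\<^sub>R madj (Ac i) (Ac i (y l) - Y i)) = (G - grad f (y l)) - xi"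
  proof -
    have "(\<Sum>i<kc. (1/lam) *\<^sub>R madj (Ac i) (Ac i (y l) - Y i)) =
      (\<Sum>i<kc. (1/lam) *\<^sub>R madj (Ac i) (Ac i (y l)) - (1/lam) *\<^sub>R madj (Ac i) (Y i))"
      by (rule sum.cong[OF refl per])
    then show ?thesis unfolding G_def hgrad xieq by (simp add: sum_subtractf)
  qed
  define s where "s = grad f (y l) + w + (\<Sum>i<kc. (1/lam) *\<^sub>R madj (Ac i) (Ac i (y l) - Y i))"
  have sS: "s \<in> stat_set v n N idx r rs f lam (y l) (y (Suc l))"
    unfolding stat_set_def s_def using wN Y y'_def by blast
  have seq: "s = Lb *\<^sub>R (y l - y')"
    unfolding s_def sumeq weq by (simp add: algebra_simps)
  have "infdist 0 (stat_set v n N idx r rs f lam (y l) (y (Suc l))) \<le> dist 0 s"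
    by (rule infdist_le[OF sS])
  also have "dist 0 s = Lb * norm (y (Suc l) - y l)"
    using Lb by (simp add: seq y'_def norm_minus_commute)
  finally show ?thesis by (simp add: Lb_def)
qed

lemma part23:
  assumes "0 < Lmin" "1 < tau" "0 < c"
  shows "\<forall>y Lbar. vnpg_run v n N idx r rs f lam Lmin Lmax tau c M y Lbar \<longrightarrow>
        bounded (range Lbar) \<and>
        (\<forall>\<epsilon>>0. \<exists>l.
           norm (y (Suc l) - y l) \<le> \<epsilon> \<and>
           Flam v n N idx r rs f lam (y l) \<le> Flam v n N idx r rs f lam (y 0) \<and>
           infdist 0 (stat_set v n N idx r rs f lam (y l) (y (Suc l))) \<le> \<epsilon>)"
proof (intro allI impI)
  fix y Lbar
  assume run: "vnpg_run v n N idx r rs f lam Lmin Lmax tau c M y Lbar"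
  define B where "B = max Lmax (tau * Lstar c)"
  have bnd: "0 < Lbar l \<and> Lbar l \<le> B" for l
    using Lbar_bound[OF run assms(1,2)] B_def by blast
  have B0: "0 < B" using bnd[of 0] by linarith
  have "bounded (range Lbar)"
  proof -
    have "norm (Lbar l) \<le> B" for l using bnd[of l] by simp
    then show ?thesis unfolding bounded_iff by blast
  qed
  moreover have "\<forall>\<epsilon>>0. \<exists>l.
           norm (y (Suc l) - y l) \<le> \<epsilon> \<and>
           Flam v n N idx r rs f lam (y l) \<le> Flam v n N idx r rs f lam (y 0) \<and>
           infdist 0 (stat_set v n N idx r rs f lam (y l) (y (Suc l))) \<le> \<epsilon>"
  proof (intro allI impI)
    fix \<epsilon> :: real assume e: "0 < \<epsilon>"
    define \<phi> where "\<phi> l = R (y l)" for l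
    define d where "d l = c/2 * (norm (y (Suc l) - y l))\<^sup>2" for l
    have stp: "\<phi> (Suc l) \<le> Max (\<phi> ` {l-M..l}) - d l" for l
      using acc_real[OF run, of l] unfolding \<phi>_def d_def by simp
    have dpos: "0 \<le> d l" for l using assms(3) unfolding d_def by simp
    define \<eta> where "\<eta> = \<epsilon> / (B + 1)"
    have eta: "0 < \<eta>" using e B0 by (simp add: \<eta>_def)
    have "0 < c/2 * \<eta>\<^sup>2" using eta assms(3) by simp
    moreover have "0 \<le> \<phi> l" for l using R_nonneg \<phi>_def by simp
    ultimately obtain l where l: "d l \<le> c/2 * \<eta>\<^sup>2"
      using nonmono2[of \<phi> M d, OF stp, of "c/2 * \<eta>\<^sup>2"] by blast
    have "(norm (y (Suc l) - y l))\<^sup>2 \<le> \<eta>\<^sup>2" using l assms(3) unfolding d_def by simp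
    then have nd: "norm (y (Suc l) - y l) \<le> \<eta>" using eta by (simp add: power2_le_iff_abs_le)
    have "\<eta> * (B + 1) = \<epsilon>" using B0 by (simp add: \<eta>_def)
    then have e1: "\<eta> + B * \<eta> = \<epsilon>" by (simp add: algebra_simps)
    have p: "0 < B * \<eta>" using eta B0 by simp
    have etaB: "\<eta> \<le> \<epsilon>" "B * \<eta> \<le> \<epsilon>" using e1 p eta by linarith+
    have "infdist 0 (stat_set v n N idx r rs f lam (y l) (y (Suc l))) \<le> Lbar l * norm (y (Suc l) - y l)"
      by (rule stat[OF run assms(1,2)])
    also have "\<dots> \<le> B * \<eta>"
      using bnd[of l] nd by (intro mult_mono) auto
    finally have i: "infdist 0 (stat_set v n N idx r rs f lam (y l) (y (Suc l))) \<le> \<epsilon>" using etaB by simp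
    have "\<phi> l \<le> \<phi> 0" by (rule nonmono1[OF stp dpos])
    then have F: "Flam v n N idx r rs f lam (y l) \<le> Flam v n N idx r rs f lam (y 0)"
      using Flam_R[OF run_Om[OF run]] \<phi>_def by simp
    show "\<exists>l. norm (y (Suc l) - y l) \<le> \<epsilon> \<and>
           Flam v n N idx r rs f lam (y l) \<le> Flam v n N idx r rs f lam (y 0) \<and>
           infdist 0 (stat_set v n N idx r rs f lam (y l) (y (Suc l))) \<le> \<epsilon>"
      using nd etaB F i by force
  qed
  ultimately show "bounded (range Lbar) \<and>
        (\<forall>\<epsilon>>0. \<exists>l.
           norm (y (Suc l) - y l) \<le> \<epsilon> \<and>
           Flam v n N idx r rs f lam (y l) \<le> Flam v n N idx r rs f lam (y 0) \<and>
           infdist 0 (stat_set v n N idx r rs f lam (y l) (y (Suc l))) \<le> \<epsilon>)" by blast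
qed

end

lemma Lsmall_coord:
  "Lsmall n idx rs i = coordmat (rs i + 1) (n - (rs i + 1) + 1) (\<lambda>(a,b). idx (i * n + (a + b)))"
  by (rule ext) (auto simp: Lsmall_def hankel_def blk_def coordmat_def intro!: eq_matI)

lemma Lbig_coord:
  "Lbig n N idx r = coordmat (r + 1) (N * (n - r)) (\<lambda>(a,b). idx ((b div (n - r)) * n + (a + b mod (n - r))))"
  by (rule ext) (auto simp: Lbig_def blk_def coordmat_def intro!: eq_matI)

lemma rank_le_carrier: "rank_le p q \<rho> \<subseteq> carrier_mat p q"
  by (auto simp: rank_le_def)

lemma struct_exists:
  assumes "\<forall>i<N. rs i \<le> r" "r \<le> (n - 1) div 2" "n \<ge> 1"
  shows "\<exists>P Q \<Phi>. \<forall>i<kk v N. AA v n N idx r rs i = coordmat (P i) (Q i) (\<Phi> i) \<and>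
            CC v n N r rs i \<subseteq> carrier_mat (P i) (Q i)"
proof -
  have dim: "n - (rs i + 1) + 1 = n - rs i" if "i < N" for i
  proof -
    have "rs i \<le> r" using assms that by blast
    moreover have "(n - 1) div 2 \<le> n - 1" by simp
    ultimately have "rs i + 1 \<le> n" using assms by linarith
    then show ?thesis by simp
  qed
  have Ls: "Lsmall n idx rs i = coordmat (rs i + 1) (n - rs i) (\<lambda>(a,b). idx (i * n + (a + b)))"
    if "i < N" for i
    using Lsmall_coord[of n idx rs i] dim[OF that] by simp
  define \<phi>b where "\<phi>b = (\<lambda>(a,b). idx ((b div (n - r)) * n + (a + b mod (n - r))))"
  define \<phi>s where "\<phi>s i = (\<lambda>(a::nat,b::nat). idx (i * n + (a + b)))" for i
  show ?thesis
  proof (cases v)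
    case VarI
    show ?thesis
      by (rule exI[of _ "\<lambda>i. r + 1"], rule exI[of _ "\<lambda>i. N * (n - r)"], rule exI[of _ "\<lambda>i. \<phi>b"])
         (simp add: VarI kk_def AA_def CC_def Lbig_coord \<phi>b_def rank_le_carrier)
  next
    case VarII
    show ?thesis
      by (rule exI[of _ "\<lambda>i. rs i + 1"], rule exI[of _ "\<lambda>i. n - rs i"], rule exI[of _ "\<phi>s"])
         (simp add: VarII kk_def AA_def CC_def Ls \<phi>s_def rank_le_carrier)
  next
    case VarIII
    show ?thesis
      by (rule exI[of _ "\<lambda>i. if i < N then rs i + 1 else r + 1"],
          rule exI[of _ "\<lambda>i. if i < N then n - rs i else N * (n - r)"],
          rule exI[of _ "\<lambda>i. if i < N then \<phi>s i else \<phi>b"])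
         (simp add: VarIII kk_def AA_def CC_def Ls \<phi>s_def \<phi>b_def Lbig_coord rank_le_carrier)
  qed
qed

theorem theorem3p1:
  fixes n N r :: nat and rs :: "nat \<Rightarrow> nat" and idx :: "nat \<Rightarrow> 'd::finite"
    and v :: variant and f :: "real^'d \<Rightarrow> real"
    and lam Lmin Lmax tau c :: real and M :: nat
  assumes "n \<ge> 1" and "N \<ge> 1"
    and "bij_betw idx {..<N * n} (UNIV :: 'd set)"
    and "0 < r" and "r \<le> (n - 1) div 2"
    and "\<forall>i<N. 0 < rs i \<and> rs i \<le> r"
    and "\<forall>y. 0 \<le> f y"
    and "\<forall>\<alpha>. bounded {y. f y \<le> \<alpha>}"
    and "\<forall>y. f differentiable (at y)"
    and "continuous_on UNIV (grad f)"
    and "\<exists>L. L-lipschitz_on UNIV (grad f)"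
    and "lam > 0"
    and "0 < Lmin" and "Lmin < Lmax" and "tau > 1" and "c > 0"
  shows
    "(\<forall>l y xi L0 u.
        vnpg_prefix v n N idx r rs f lam Lmin Lmax tau c M l y \<and>
        xi_ok v n N idx r rs lam (y l) xi \<and> Lmin \<le> L0 \<and> L0 \<le> Lmax \<and>
        (\<forall>i. candidate v n N idx r rs f lam (y l) xi (L0 * tau ^ i) (u i))
        \<longrightarrow> (\<exists>i. accept v n N idx r rs f lam c M y l (u i)))
     \<and>
     (\<forall>y Lbar. vnpg_run v n N idx r rs f lam Lmin Lmax tau c M y Lbar \<longrightarrow>
        bounded (range Lbar) \<and>
        (\<forall>\<epsilon>>0. \<exists>l.
           norm (y (Suc l) - y l) \<le> \<epsilon> \<and>
           Flam v n N idx r rs f lam (y l) \<le> Flam v n N idx r rs f lam (y 0) \<and>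
           infdist 0 (stat_set v n N idx r rs f lam (y l) (y (Suc l))) \<le> \<epsilon>))"
proof -
  have rs: "\<forall>i<N. rs i \<le> r" using assms(6) by blast
  obtain P Q \<Phi> where PQ: "\<forall>i<kk v N. AA v n N idx r rs i = coordmat (P i) (Q i) (\<Phi> i) \<and>
            CC v n N r rs i \<subseteq> carrier_mat (P i) (Q i)"
    using struct_exists[OF rs assms(5) assms(1), of v idx] by blast
  obtain Lf where Lf: "Lf-lipschitz_on UNIV (grad f)" using assms(11) by blast
  interpret C: ctx v n N r rs idx P Q \<Phi> f lam Lf
    by unfold_locales (use PQ assms(7,9,12) Lf in auto)
  show ?thesis
    using C.part1[OF assms(13) assms(15), of Lmax c M] C.part23[OF assms(13) assms(15) assms(16), of Lmax M]
    by blast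
qed

end
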